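(* Consider a panel with $i=1,\dots,N$, $t=1,\dots,T$, regressors $X_{it}=(X_{it,1},\dots,X_{it,K})$, and $\Gamma_{it}=h(\alpha_i,\gamma_t)$ with $\alpha_i\in\mathcal{A}$, $\gamma_t\in\mathcal{C}$. Let units be assigned to groups $g_i\in\{1,\dots,G\}$ and time periods to groups $c_t\in\{1,\dots,C\}$, and let $\widehat\lambda^*_i\in\mathbb{R}^{R^*}$, $\widehat f^*_t\in\mathbb{R}^{R^*}$ be given (random) vectors. Define $\widetilde X_k=M_NX_kM_T$, $\widetilde\Gamma=M_N\Gamma M_T$ and $$\kappa_{NT}=\Big(\sum_{i=1}^N\sum_{t=1}^T\widetilde X_{it}'\widetilde X_{it}\Big)^{-1}\sum_{i=1}^N\sum_{t=1}^T\widetilde X_{it}'\,\widetilde\Gamma_{it}.$$ Suppose there is a sequence $\xi_{NT}>0$ with $\xi_{NT}\to0$ as $N,T\to\infty$ such that: (i) $h$ is at least twice continuously differentiable with uniformly bounded second derivatives; (ii) every unit belongs to exactly one group $g_i$ and every period to exactly one group $c_t$, and all groups have size at most $Q_{\max}$ (a fixed bound); (iii) there are functions $\lambda^*:\mathcal{A}\to\mathbb{R}^{R^*}$, $f^*:\mathcal{C}\to\mathbb{R}^{R^*}$ and $B>0$ with $\|a-b\|\le B\|\lambda^*(a)-\lambda^*(b)\|$ for all $a,b\in\mathcal{A}$ and $\|a-b\|\le B\|f^*(a)-f^*(b)\|$ for all $a,b\in\mathcal{C}$, and $\mathcal{A},\mathcal{C}$ are convex; (iv) $\frac1N\sum_{i=1}^N\|\widehat\lambda^*_i-\lambda^*(\alpha_i)\|^2=O_P(\xi_{NT})$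 and $\frac1T\sum_{t=1}^T\|\widehat f^*_t-f^*(\gamma_t)\|^2=O_P(\xi_{NT})$; (v) $\frac1N\sum_{i=1}^N\|\widehat\lambda^*_i-\widehat\lambda^*_{j(i)}\|^2=O_P(\xi_{NT})$ for any matching function $j(i)\in\{1,\dots,N\}$ with $g_i=g_{j(i)}$, and $\frac1T\sum_{t=1}^T\|\widehat f^*_t-\widehat f^*_{s(t)}\|^2=O_P(\xi_{NT})$ for any matching function $s(t)\in\{1,\dots,T\}$ with $c_t=c_{s(t)}$; (vi) $\max_{k,i,t}|\widetilde X_{it,k}|=O_P(1)$ and $\operatorname{plim}_{N,T\to\infty}\frac1{NT}\sum_{i,t}\widetilde X_{it}'\widetilde X_{it}=\Omega$ for a positive definite non-random matrix $\Omega$. Then $\kappa_{NT}=O_P(\xi_{NT})$.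
   Context: $X_k=(X_{it,k})$ and $\Gamma=(\Gamma_{it})$ are $N\times T$ matrices. $D_\nu$ is the $N\times G$ binary matrix whose $i$-th row has a single one in column $g_i$, and $D_\delta$ is the $T\times C$ binary matrix whose $t$-th row has a single one in column $c_t$. $M_N=\mathbb{I}_N-D_\nu(D_\nu'D_\nu)^{-1}D_\nu'$ and $M_T=\mathbb{I}_T-D_\delta(D_\delta'D_\delta)^{-1}D_\delta'$. $\widetilde X_{it}=(\widetilde X_{it,1},\dots,\widetilde X_{it,K})$ is a $1\times K$ row vector, so $\widetilde X_{it}'\widetilde X_{it}$ is $K\times K$. $\|\cdot\|$ is the Euclidean norm. *)

theory Defs
  imports "HOL-Analysis.Analysis" "HOL-Probability.Probability"
begin

text \<open>Outer probability (so that O_P and plim make sense without separate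
  measurability hypotheses; it coincides with the probability on measurable events).\<close>
definition outer_prob :: "'w measure \<Rightarrow> 'w set \<Rightarrow> real" where
  "outer_prob M A = Inf {measure M B | B. B \<in> sets M \<and> A \<subseteq> B}"

definition bigOP :: "'w measure \<Rightarrow> 'i filter \<Rightarrow> ('i \<Rightarrow> 'w \<Rightarrow> real) \<Rightarrow> ('i \<Rightarrow> real) \<Rightarrow> bool" where
  "bigOP M F Y a \<longleftrightarrow>
     (\<forall>eps>0. \<exists>Bd. eventually (\<lambda>n. outer_prob M {w \<in> space M. \<bar>Y n w\<bar> > Bd * a n} < eps) F)"

definition conv_in_prob :: "'w measure \<Rightarrow> 'i filter \<Rightarrow> ('i \<Rightarrow> 'w \<Rightarrow> 'v::metric_space) \<Rightarrow> 'v \<Rightarrow> bool" where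
  "conv_in_prob M F S L \<longleftrightarrow>
     (\<forall>eps>0. ((\<lambda>n. outer_prob M {w \<in> space M. dist (S n w) L > eps}) \<longlongrightarrow> 0) F)"

text \<open>For a group assignment g on units 1..n, M_N = I - D (D'D)^{-1} D' acts on a vector
  x = (x_1,..,x_n) by subtracting from x_i the average of x over the group of i.\<close>
definition grp_avg :: "(nat \<Rightarrow> nat) \<Rightarrow> nat \<Rightarrow> (nat \<Rightarrow> 'v::real_vector) \<Rightarrow> nat \<Rightarrow> 'v" where
  "grp_avg g n x i =
     (1 / real (card {i' \<in> {1..n}. g i' = g i})) *\<^sub>R (\<Sum>i' \<in> {i' \<in> {1..n}. g i' = g i}. x i')"

text \<open>(M_N Z M_T)_{it} for an N x T array Z (entries may be vectors, i.e. applied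
  componentwise to the K regressor matrices simultaneously).\<close>
definition two_way_demean ::
  "(nat \<Rightarrow> nat) \<Rightarrow> (nat \<Rightarrow> nat) \<Rightarrow> nat \<Rightarrow> nat \<Rightarrow> (nat \<Rightarrow> nat \<Rightarrow> 'v::real_vector) \<Rightarrow> nat \<Rightarrow> nat \<Rightarrow> 'v" where
  "two_way_demean g c N T Z i t =
     (let ZT = (\<lambda>i' t'. Z i' t' - grp_avg c T (\<lambda>s. Z i' s) t')   \<comment> \<open>Z M_T\<close>
      in ZT i t - grp_avg g N (\<lambda>j. ZT j t) i)"

definition pos_def_mat :: "real^'k^'k \<Rightarrow> bool" where
  "pos_def_mat A \<longleftrightarrow> transpose A = A \<and> (\<forall>v. v \<noteq> 0 \<longrightarrow> v \<bullet> (A *v v) > 0)"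

text \<open>x' x for a 1 x K row vector x.\<close>
definition outer_self :: "real^'k \<Rightarrow> real^'k^'k" where
  "outer_self x = (\<chi> k l. x $ k * x $ l)"

definition kappa_NT ::
  "(nat \<Rightarrow> nat) \<Rightarrow> (nat \<Rightarrow> nat) \<Rightarrow> nat \<Rightarrow> nat \<Rightarrow> (nat \<Rightarrow> nat \<Rightarrow> real^'k) \<Rightarrow>
   (nat \<Rightarrow> nat \<Rightarrow> real) \<Rightarrow> real^'k" where
  "kappa_NT g c N T X Gam =
     matrix_inv (\<Sum>i\<in>{1..N}. \<Sum>t\<in>{1..T}. outer_self (two_way_demean g c N T X i t))
     *v (\<Sum>i\<in>{1..N}. \<Sum>t\<in>{1..T}.
           two_way_demean g c N T Gam i t *\<^sub>R two_way_demean g c N T X i t)"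

end

theory Submission imports Defs begin



lemma mixed_bound:
  fixes h :: "'a::euclidean_space \<times> 'c::euclidean_space \<Rightarrow> real"
    and Dh :: "'a \<times> 'c \<Rightarrow> ('a \<times> 'c) \<Rightarrow>\<^sub>L real"
    and D2h :: "'a \<times> 'c \<Rightarrow> ('a \<times> 'c) \<Rightarrow>\<^sub>L (('a \<times> 'c) \<Rightarrow>\<^sub>L real)"
  assumes cA: "convex A" and cC: "convex Cs" and sub: "A \<times> Cs \<subseteq> U"
    and d1: "\<forall>x\<in>U. (h has_derivative blinfun_apply (Dh x)) (at x)"
    and d2: "\<forall>x\<in>U. (Dh has_derivative blinfun_apply (D2h x)) (at x)"
    and bd: "\<forall>x\<in>A \<times> Cs. norm (D2h x) \<le> L"
    and a: "a \<in> A" and a': "a' \<in> A" and c: "c \<in> Cs" and c': "c' \<in> Cs"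
  shows "\<bar>h (a, c) - h (a, c') - h (a', c) + h (a', c')\<bar> \<le> L * norm (a - a') * norm (c - c')"
proof -
  have L0: "0 \<le> L" using bd a c by (meson mem_Sigma_iff norm_ge_zero order_trans)
  have step1: "\<bar>Dh (p, c) (u, 0) - Dh (p, c') (u, 0)\<bar> \<le> L * norm u * norm (c - c')"
    if p: "p \<in> A" for p u
  proof -
    have der: "((\<lambda>q. Dh (p, q) (u, 0)) has_derivative (\<lambda>v. D2h (p, q) (0, v) (u, 0))) (at q within Cs)"
      if q: "q \<in> Cs" for q
    proof -
      have pq: "(p, q) \<in> U" using sub p q by auto
      have "((\<lambda>q. (p, q)) has_derivative (\<lambda>v. (0, v))) (at q within Cs)"
        by (auto intro!: derivative_eq_intros)
      from has_derivative_compose[OF this] d2 pq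
      have "((\<lambda>q. Dh (p, q)) has_derivative (\<lambda>v. D2h (p, q) (0, v))) (at q within Cs)"
        by auto
      from blinfun.FDERIV[OF this has_derivative_const[of "(u, 0)"]]
      show ?thesis by simp
    qed
    have onb: "onorm (\<lambda>v. D2h (p, q) (0, v) (u, 0)) \<le> L * norm u" if q: "q \<in> Cs" for q
    proof (rule onorm_le)
      fix v
      have "norm (D2h (p, q) (0, v) (u, 0)) \<le> norm (D2h (p, q) (0, v)) * norm (u, 0::'c)"
        by (rule norm_blinfun)
      also have "\<dots> \<le> (norm (D2h (p, q)) * norm (0::'a, v)) * norm (u, 0::'c)"
        by (intro mult_right_mono norm_blinfun) auto
      also have "\<dots> \<le> (L * norm v) * norm u"
        using bd p q by (auto simp: norm_Pair intro!: mult_right_mono mult_mono)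
      finally show "norm (D2h (p, q) (0, v) (u, 0)) \<le> L * norm u * norm v"
        by (simp add: mult_ac)
    qed
    have "norm (Dh (p, c) (u, 0) - Dh (p, c') (u, 0)) \<le> L * norm u * norm (c - c')"
      by (rule differentiable_bound[OF cC der onb c c'])
    then show ?thesis by simp
  qed
  define phi where "phi p = h (p, c) - h (p, c')" for p
  have der: "(phi has_derivative (\<lambda>u. Dh (p, c) (u, 0) - Dh (p, c') (u, 0))) (at p within A)"
    if p: "p \<in> A" for p
  proof -
    have pc: "(p, c) \<in> U" "(p, c') \<in> U" using sub p c c' by auto
    have "((\<lambda>p. (p, c)) has_derivative (\<lambda>u. (u, 0))) (at p within A)"
      "((\<lambda>p. (p, c')) has_derivative (\<lambda>u. (u, 0))) (at p within A)"
      by (auto intro!: derivative_eq_intros)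
    note hc = has_derivative_compose[OF this(1)] has_derivative_compose[OF this(2)]
    have "((\<lambda>p. h (p, c)) has_derivative (\<lambda>u. Dh (p, c) (u, 0))) (at p within A)"
      using hc(1) d1 pc(1) by blast
    moreover have "((\<lambda>p. h (p, c')) has_derivative (\<lambda>u. Dh (p, c') (u, 0))) (at p within A)"
      using hc(2) d1 pc(2) by blast
    ultimately have "((\<lambda>p. h (p, c) - h (p, c')) has_derivative (\<lambda>u. Dh (p, c) (u, 0) - Dh (p, c') (u, 0))) (at p within A)"
      by (rule has_derivative_diff)
    then show ?thesis unfolding phi_def by simp
  qed
  have onb: "onorm (\<lambda>u. Dh (p, c) (u, 0) - Dh (p, c') (u, 0)) \<le> L * norm (c - c')"
    if p: "p \<in> A" for p
    by (rule onorm_le) (use step1[OF p] in \<open>simp add: mult_ac\<close>)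
  have "norm (phi a - phi a') \<le> L * norm (c - c') * norm (a - a')"
    by (rule differentiable_bound[OF cA der onb a a'])
  then show ?thesis unfolding phi_def by (simp add: mult_ac algebra_simps)
qed



lemma quad_bound:
  fixes E :: "real^'k::finite^'k" and v :: "real^'k"
  shows "\<bar>v \<bullet> (E *v v)\<bar> \<le> real (CARD('k))^2 * norm E * (norm v)^2"
proof -
  have "\<bar>v \<bullet> (E *v v)\<bar> = \<bar>\<Sum>i\<in>UNIV. \<Sum>j\<in>UNIV. v$i * E$i$j * v$j\<bar>"
    by (simp add: inner_vec_def matrix_vector_mult_def sum_distrib_left mult_ac)
  also have "\<dots> \<le> (\<Sum>i\<in>UNIV. \<Sum>j\<in>UNIV. \<bar>v$i * E$i$j * v$j\<bar>)"
    by (rule order_trans[OF sum_abs]) (intro sum_mono sum_abs)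
  also have "\<dots> \<le> (\<Sum>i\<in>(UNIV::'k set). \<Sum>j\<in>(UNIV::'k set). norm E * (norm v)^2)"
  proof (intro sum_mono)
    fix i j
    have "\<bar>E$i$j\<bar> \<le> norm E"
      using component_le_norm_cart[of "E$i" j] Finite_Cartesian_Product.norm_nth_le[of E i] by simp
    moreover have "\<bar>v$i\<bar> \<le> norm v" "\<bar>v$j\<bar> \<le> norm v" by (auto simp: component_le_norm_cart)
    ultimately have "\<bar>v$i\<bar> * \<bar>E$i$j\<bar> * \<bar>v$j\<bar> \<le> norm v * norm E * norm v"
      by (intro mult_mono) auto
    then show "\<bar>v$i * E$i$j * v$j\<bar> \<le> norm E * (norm v)^2"
      by (simp add: abs_mult power2_eq_square mult_ac)
  qed
  also have "\<dots> = real (CARD('k))^2 * norm E * (norm v)^2"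
    by (simp add: power2_eq_square)
  finally show ?thesis .
qed

lemma inv_bound:
  fixes S Omega :: "real^'k::finite^'k" and b :: "real^'k"
  assumes cpos: "cc > 0" and mu: "mu > 0"
    and coer: "\<And>v. v \<bullet> (Omega *v v) \<ge> mu * (norm v)^2"
    and d: "dist ((1 / cc) *\<^sub>R S) Omega \<le> mu / (2 * real (CARD('k))^2)"
  shows "norm (matrix_inv S *v b) \<le> 2 * norm b / (cc * mu)"
proof -
  define E where "E = (1 / cc) *\<^sub>R S - Omega"
  have Sdef: "S = cc *\<^sub>R (Omega + E)" using cpos by (simp add: E_def)
  have nE: "norm E \<le> mu / (2 * real (CARD('k))^2)" using d by (simp add: E_def dist_norm)
  have Kpos: "real (CARD('k))^2 > 0" by simp
  have lb: "v \<bullet> (S *v v) \<ge> cc * (mu / 2) * (norm v)^2" for v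
  proof -
    have q: "\<bar>v \<bullet> (E *v v)\<bar> \<le> real (CARD('k))^2 * norm E * (norm v)^2" by (rule quad_bound)
    have "real (CARD('k))^2 * norm E \<le> mu / 2"
      using nE Kpos by (simp add: field_simps)
    then have "real (CARD('k))^2 * norm E * (norm v)^2 \<le> mu / 2 * (norm v)^2"
      by (intro mult_right_mono) auto
    with q coer[of v] have "v \<bullet> (Omega *v v) + v \<bullet> (E *v v) \<ge> mu / 2 * (norm v)^2" by linarith
    moreover have "v \<bullet> (S *v v) = cc * (v \<bullet> (Omega *v v) + v \<bullet> (E *v v))"
      by (simp add: Sdef matrix_vector_mult_add_rdistrib inner_add_right
          flip: scaleR_matrix_vector_assoc)
    ultimately show ?thesis using cpos
      by (metis mult.assoc mult_left_mono less_imp_le)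
  qed
  have ker: "\<forall>x. S *v x = 0 \<longrightarrow> x = 0"
  proof (intro allI impI)
    fix x assume "S *v x = 0"
    with lb[of x] have "cc * (mu / 2) * (norm x)^2 \<le> 0" by simp
    with cpos mu have "(norm x)^2 \<le> 0"
      by (metis half_gt_zero mult_le_0_iff mult_pos_pos not_le)
    then show "x = 0" by simp
  qed
  then have "invertible S"
    using matrix_left_invertible_ker invertible_left_inverse by blast
  then have "S ** matrix_inv S = mat 1"
    unfolding invertible_def matrix_inv_def by (rule someI_ex[THEN conjunct1])
  then have Sk: "S *v (matrix_inv S *v b) = b"
    by (metis matrix_vector_mul_assoc matrix_vector_mul_lid)
  define k where "k = matrix_inv S *v b"
  have "cc * (mu / 2) * (norm k)^2 \<le> k \<bullet> (S *v k)" by (rule lb)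
  also have "\<dots> = k \<bullet> b" using Sk k_def by simp
  also have "\<dots> \<le> norm k * norm b" by (rule Cauchy_Schwarz_ineq2[THEN order_trans[OF abs_ge_self]])
  finally have *: "cc * (mu / 2) * (norm k)^2 \<le> norm k * norm b" .
  show ?thesis
  proof (cases "norm k = 0")
    case True then show ?thesis using k_def cpos mu by simp
  next
    case False
    then have nk: "norm k > 0" by simp
    from * have "cc * (mu / 2) * norm k * norm k \<le> norm b * norm k"
      by (simp add: power2_eq_square mult_ac)
    then have "cc * (mu / 2) * norm k \<le> norm b" using nk by simp
    then show ?thesis using cpos mu k_def by (simp add: field_simps)
  qed
qed



lemma grp_card_pos:
  assumes "i \<in> {1..N}" shows "card {i' \<in> {1..N}. (g::nat\<Rightarrow>nat) i' = g i} > 0"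
  using assms by (auto simp: card_gt_0_iff)

lemma grp_same:
  assumes "i' \<in> {i' \<in> {1..N}. (g::nat\<Rightarrow>nat) i' = g i}"
  shows "{i'' \<in> {1..N}. g i'' = g i'} = {i'' \<in> {1..N}. g i'' = g i}"
  using assms by auto

lemma grp_sum_avg:
  fixes F :: "nat \<Rightarrow> real" and g :: "nat \<Rightarrow> nat"
  shows "(\<Sum>i\<in>{1..N}. (1 / real (card {i' \<in> {1..N}. g i' = g i})) *
            (\<Sum>i'\<in>{i' \<in> {1..N}. g i' = g i}. F i')) = (\<Sum>i\<in>{1..N}. F i)"
proof -
  let ?G = "\<lambda>i. {i' \<in> {1..N}. g i' = g i}"
  have "(\<Sum>i\<in>{1..N}. (1 / real (card (?G i))) * (\<Sum>i'\<in>?G i. F i'))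
      = (\<Sum>i\<in>{1..N}. \<Sum>i'\<in>?G i. F i' / real (card (?G i')))"
  proof (rule sum.cong[OF refl])
    fix i assume "i \<in> {1..N}"
    have "(1 / real (card (?G i))) * (\<Sum>i'\<in>?G i. F i') = (\<Sum>i'\<in>?G i. F i' / real (card (?G i)))"
      by (simp add: sum_divide_distrib)
    also have "\<dots> = (\<Sum>i'\<in>?G i. F i' / real (card (?G i')))"
      proof (rule sum.cong[OF refl])
      fix i' assume "i' \<in> ?G i"
      then have "?G i' = ?G i" by auto
      then show "F i' / real (card (?G i)) = F i' / real (card (?G i'))" by simp
    qed
    finally show "(1 / real (card (?G i))) * (\<Sum>i'\<in>?G i. F i') = (\<Sum>i'\<in>?G i. F i' / real (card (?G i')))" .
  qed
  also have "\<dots> = (\<Sum>i\<in>{1..N}. \<Sum>i'\<in>{1..N}. if g i' = g i then F i' / real (card (?G i')) else 0)"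
    by (rule sum.cong[OF refl]) (subst sum.inter_filter, simp_all)
  also have "\<dots> = (\<Sum>i'\<in>{1..N}. \<Sum>i\<in>{1..N}. if g i' = g i then F i' / real (card (?G i')) else 0)"
    by (rule sum.swap)
  also have "\<dots> = (\<Sum>i'\<in>{1..N}. F i')"
  proof (rule sum.cong[OF refl])
    fix i' assume i': "i' \<in> {1..N}"
    have "(\<Sum>i\<in>{1..N}. if g i' = g i then F i' / real (card (?G i')) else 0)
        = (\<Sum>i\<in>?G i'. F i' / real (card (?G i')))"
      by (subst sum.inter_filter) (auto intro!: sum.cong)
    also have "\<dots> = F i'"
    proof -
      have "real (card (?G i')) \<noteq> 0" using grp_card_pos[OF i', of g] by linarith
      then show ?thesis by (simp only: sum_constant times_divide_eq_right) (erule nonzero_mult_div_cancel_left)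
    qed
    finally show "(\<Sum>i\<in>{1..N}. if g i' = g i then F i' / real (card (?G i')) else 0) = F i'" .
  qed
  finally show ?thesis .
qed

definition matchf :: "(nat \<Rightarrow> nat) \<Rightarrow> nat \<Rightarrow> nat \<Rightarrow> nat \<Rightarrow> nat" where
  "matchf g N m i = (if i \<in> {1..N} \<and> m < card {i' \<in> {1..N}. g i' = g i}
      then sorted_list_of_set {i' \<in> {1..N}. g i' = g i} ! m else i)"

lemma matchf_prop:
  assumes "i \<in> {1..N}"
  shows "matchf g N m i \<in> {1..N} \<and> g (matchf g N m i) = g i"
proof (cases "m < card {i' \<in> {1..N}. g i' = g i}")
  case True
  let ?L = "sorted_list_of_set {i' \<in> {1..N}. g i' = g i}"
  have "?L ! m \<in> set ?L" using True by (intro nth_mem) simp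
  then show ?thesis using True assms by (simp add: matchf_def)
qed (use assms in \<open>simp add: matchf_def\<close>)

lemma matchf_sum:
  fixes f :: "nat \<Rightarrow> real"
  assumes i: "i \<in> {1..N}" and f: "\<And>x. f x \<ge> 0"
    and Q: "card {i' \<in> {1..N}. g i' = g i} \<le> Q"
  shows "(\<Sum>i'\<in>{i' \<in> {1..N}. g i' = g i}. f i') \<le> (\<Sum>m<Q. f (matchf g N m i))"
proof -
  let ?G = "{i' \<in> {1..N}. g i' = g i}"
  let ?L = "sorted_list_of_set ?G"
  have "(\<Sum>i'\<in>?G. f i') = sum_list (map f ?L)"
    by (simp add: sum_list_distinct_conv_sum_set)
  also have "\<dots> = (\<Sum>m\<in>{0..<card ?G}. f (?L ! m))"
    by (simp add: sum_list_sum_nth)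
  also have "\<dots> = (\<Sum>m\<in>{..<card ?G}. f (matchf g N m i))"
    using i by (intro sum.cong) (auto simp: matchf_def)
  also have "\<dots> \<le> (\<Sum>m<Q. f (matchf g N m i))"
    using Q f by (intro sum_mono2) auto
  finally show ?thesis .
qed

lemma demean_formula:
  fixes Z :: "nat \<Rightarrow> nat \<Rightarrow> real"
  assumes i: "i \<in> {1..N}" and t: "t \<in> {1..T}"
  shows "two_way_demean g c N T Z i t =
    (1 / (real (card {i' \<in> {1..N}. g i' = g i}) * real (card {t' \<in> {1..T}. c t' = c t}))) *
    (\<Sum>i'\<in>{i' \<in> {1..N}. g i' = g i}. \<Sum>t'\<in>{t' \<in> {1..T}. c t' = c t}.
        Z i t - Z i t' - Z i' t + Z i' t')"
proof -
  define G where "G = {i' \<in> {1..N}. g i' = g i}"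
  define C where "C = {t' \<in> {1..T}. c t' = c t}"
  have nG: "real (card G) > 0" using grp_card_pos[OF i] G_def by simp
  have nC: "real (card C) > 0" using grp_card_pos[OF t] C_def by simp
  have lhs: "two_way_demean g c N T Z i t = Z i t - (1 / card C) * (\<Sum>t'\<in>C. Z i t')
      - (1 / card G) * ((\<Sum>i'\<in>G. Z i' t) - (1 / card C) * (\<Sum>i'\<in>G. \<Sum>t'\<in>C. Z i' t'))"
    unfolding two_way_demean_def grp_avg_def Let_def G_def[symmetric] C_def[symmetric]
    by (simp add: sum_subtractf sum_distrib_left)
  have e1: "(\<Sum>i'\<in>G. \<Sum>t'\<in>C. Z i t) = card G * (card C * Z i t)" by simp
  have e2: "(\<Sum>i'\<in>G. \<Sum>t'\<in>C. Z i t') = card G * (\<Sum>t'\<in>C. Z i t')" by simp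
  have e3: "(\<Sum>i'\<in>G. \<Sum>t'\<in>C. Z i' t) = card C * (\<Sum>i'\<in>G. Z i' t)"
    by (simp add: sum_distrib_left mult.commute)
  have "(\<Sum>i'\<in>G. \<Sum>t'\<in>C. Z i t - Z i t' - Z i' t + Z i' t')
      = (\<Sum>i'\<in>G. \<Sum>t'\<in>C. Z i t) - (\<Sum>i'\<in>G. \<Sum>t'\<in>C. Z i t') - (\<Sum>i'\<in>G. \<Sum>t'\<in>C. Z i' t)
        + (\<Sum>i'\<in>G. \<Sum>t'\<in>C. Z i' t')"
    by (simp add: sum.distrib sum_subtractf algebra_simps)
  also have "\<dots> = card G * (card C * Z i t) - card G * (\<Sum>t'\<in>C. Z i t') - card C * (\<Sum>i'\<in>G. Z i' t)
        + (\<Sum>i'\<in>G. \<Sum>t'\<in>C. Z i' t')"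
    unfolding e1 e2 e3 ..
  finally have rhs: "(\<Sum>i'\<in>G. \<Sum>t'\<in>C. Z i t - Z i t' - Z i' t + Z i' t') = \<dots>" .
  show ?thesis unfolding lhs G_def[symmetric] C_def[symmetric] rhs
    using nG nC by (simp add: field_simps)
qed



lemma gamma_pt_bound:
  fixes h :: "'a::real_normed_vector \<times> 'c::real_normed_vector \<Rightarrow> real"
  assumes mixed: "\<And>a a' c c'. a \<in> A \<Longrightarrow> a' \<in> A \<Longrightarrow> c \<in> Cs \<Longrightarrow> c' \<in> Cs \<Longrightarrow>
      \<bar>h (a, c) - h (a, c') - h (a', c) + h (a', c')\<bar> \<le> L * norm (a - a') * norm (c - c')"
    and L: "L \<ge> 0" and al: "\<And>i. al i \<in> A" and ga: "\<And>t. ga t \<in> Cs"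
    and i: "i \<in> {1..N}" and t: "t \<in> {1..T}"
  shows "\<bar>two_way_demean g c N T (\<lambda>i t. h (al i, ga t)) i t\<bar> \<le>
     (L / 2) * ((1 / real (card {i' \<in> {1..N}. g i' = g i})) * (\<Sum>i'\<in>{i' \<in> {1..N}. g i' = g i}. (norm (al i - al i'))^2)
              + (1 / real (card {t' \<in> {1..T}. c t' = c t})) * (\<Sum>t'\<in>{t' \<in> {1..T}. c t' = c t}. (norm (ga t - ga t'))^2))"
proof -
  define G where "G = {i' \<in> {1..N}. g i' = g i}"
  define C where "C = {t' \<in> {1..T}. c t' = c t}"
  have nG: "real (card G) > 0" using grp_card_pos[OF i] G_def by simp
  have nC: "real (card C) > 0" using grp_card_pos[OF t] C_def by simp
  have "\<bar>two_way_demean g c N T (\<lambda>i t. h (al i, ga t)) i t\<bar> =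
     (1 / (real (card G) * real (card C))) * \<bar>\<Sum>i'\<in>G. \<Sum>t'\<in>C.
        h (al i, ga t) - h (al i, ga t') - h (al i', ga t) + h (al i', ga t')\<bar>"
    unfolding demean_formula[OF i t] G_def[symmetric] C_def[symmetric]
    using nG nC by (simp add: abs_mult)
  also have "\<dots> \<le> (1 / (real (card G) * real (card C))) * (\<Sum>i'\<in>G. \<Sum>t'\<in>C.
        (L / 2) * ((norm (al i - al i'))^2 + (norm (ga t - ga t'))^2))"
  proof (rule mult_left_mono)
    show "0 \<le> 1 / (real (card G) * real (card C))" using nG nC by simp
    have "\<bar>\<Sum>i'\<in>G. \<Sum>t'\<in>C. h (al i, ga t) - h (al i, ga t') - h (al i', ga t) + h (al i', ga t')\<bar>
        \<le> (\<Sum>i'\<in>G. \<Sum>t'\<in>C. \<bar>h (al i, ga t) - h (al i, ga t') - h (al i', ga t) + h (al i', ga t')\<bar>)"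
      by (rule order_trans[OF sum_abs]) (intro sum_mono sum_abs)
    also have "\<dots> \<le> (\<Sum>i'\<in>G. \<Sum>t'\<in>C. (L / 2) * ((norm (al i - al i'))^2 + (norm (ga t - ga t'))^2))"
    proof (intro sum_mono)
      fix i' t'
      have "\<bar>h (al i, ga t) - h (al i, ga t') - h (al i', ga t) + h (al i', ga t')\<bar>
          \<le> L * (norm (al i - al i') * norm (ga t - ga t'))"
        using mixed[OF al al ga ga] by (simp add: mult_ac)
      also have "\<dots> \<le> L * ((1/2) * ((norm (al i - al i'))^2 + (norm (ga t - ga t'))^2))"
      proof (rule mult_left_mono[OF _ L])
        have "0 \<le> (norm (al i - al i') - norm (ga t - ga t'))^2" by simp
        then show "norm (al i - al i') * norm (ga t - ga t') \<le> (1/2) * ((norm (al i - al i'))^2 + (norm (ga t - ga t'))^2)"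
          by (simp add: power2_diff)
      qed
      finally show "\<bar>h (al i, ga t) - h (al i, ga t') - h (al i', ga t) + h (al i', ga t')\<bar>
          \<le> (L / 2) * ((norm (al i - al i'))^2 + (norm (ga t - ga t'))^2)" by simp
    qed
    finally show "\<bar>\<Sum>i'\<in>G. \<Sum>t'\<in>C. h (al i, ga t) - h (al i, ga t') - h (al i', ga t) + h (al i', ga t')\<bar>
        \<le> (\<Sum>i'\<in>G. \<Sum>t'\<in>C. (L / 2) * ((norm (al i - al i'))^2 + (norm (ga t - ga t'))^2))" .
  qed
  also have "\<dots> = (L / 2) * ((1 / real (card G)) * (\<Sum>i'\<in>G. (norm (al i - al i'))^2)
              + (1 / real (card C)) * (\<Sum>t'\<in>C. (norm (ga t - ga t'))^2))"
  proof -
    have "(\<Sum>i'\<in>G. \<Sum>t'\<in>C. (L / 2) * ((norm (al i - al i'))^2 + (norm (ga t - ga t'))^2))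
        = (L / 2) * (real (card C) * (\<Sum>i'\<in>G. (norm (al i - al i'))^2) + real (card G) * (\<Sum>t'\<in>C. (norm (ga t - ga t'))^2))"
      by (simp add: sum.distrib sum_distrib_left sum_divide_distrib algebra_simps)
    then show ?thesis using nG nC by (simp add: field_simps)
  qed
  finally show ?thesis unfolding G_def C_def .
qed



lemma sq3: "(norm ((x::'v::real_normed_vector) + y + z))^2 \<le> 3 * ((norm x)^2 + (norm y)^2 + (norm z)^2)"
proof -
  have "norm (x + y + z) \<le> norm x + norm y + norm z" by (meson norm_triangle_le order_refl add_mono)
  then have "(norm (x + y + z))^2 \<le> (norm x + norm y + norm z)^2" by (simp add: power_mono)
  also have "\<dots> \<le> 3 * ((norm x)^2 + (norm y)^2 + (norm z)^2)"
  proof -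
    have "0 \<le> (norm x - norm y)^2 + (norm x - norm z)^2 + (norm y - norm z)^2" by simp
    then show ?thesis by (simp add: power2_eq_square algebra_simps)
  qed
  finally show ?thesis .
qed

lemma DA_bound:
  fixes al :: "nat \<Rightarrow> 'a::real_normed_vector" and lh :: "nat \<Rightarrow> 'v::real_normed_vector"
  assumes lip: "\<And>a b. a \<in> A \<Longrightarrow> b \<in> A \<Longrightarrow> norm (a - b) \<le> Bc * norm (lam a - lam b)"
    and Bc: "Bc > 0" and al: "\<And>i. al i \<in> A"
    and Q: "\<And>i. i \<in> {1..N} \<Longrightarrow> card {i' \<in> {1..N}. g i' = g i} \<le> Q"
  shows "(\<Sum>i\<in>{1..N}. (1 / real (card {i' \<in> {1..N}. g i' = g i})) *
            (\<Sum>i'\<in>{i' \<in> {1..N}. g i' = g i}. (norm (al i - al i'))^2))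
     \<le> 3 * Bc^2 * (2 * (\<Sum>i\<in>{1..N}. (norm (lh i - lam (al i)))^2)
                  + (\<Sum>m<Q. \<Sum>i\<in>{1..N}. (norm (lh i - lh (matchf g N m i)))^2))"
proof -
  let ?G = "\<lambda>i. {i' \<in> {1..N}. g i' = g i}"
  let ?e = "\<lambda>i. (norm (lh i - lam (al i)))^2"
  let ?d = "\<lambda>i i'. (norm (lh i - lh i'))^2"
  have pt: "(norm (al i - al i'))^2 \<le> 3 * Bc^2 * (?e i + ?d i i' + ?e i')" for i i'
  proof -
    have "norm (al i - al i') \<le> Bc * norm (lam (al i) - lam (al i'))" using lip al by blast
    then have "(norm (al i - al i'))^2 \<le> (Bc * norm (lam (al i) - lam (al i')))^2"
      by (simp add: power_mono)
    also have "\<dots> = Bc^2 * (norm ((lam (al i) - lh i) + (lh i - lh i') + (lh i' - lam (al i'))))^2"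
      by (simp add: power_mult_distrib)
    also have "\<dots> \<le> Bc^2 * (3 * ((norm (lam (al i) - lh i))^2 + (norm (lh i - lh i'))^2 + (norm (lh i' - lam (al i')))^2))"
      by (intro mult_left_mono sq3) simp
    also have "\<dots> = 3 * Bc^2 * (?e i + ?d i i' + ?e i')"
      by (simp add: norm_minus_commute)
    finally show ?thesis .
  qed
  have "(\<Sum>i\<in>{1..N}. (1 / real (card (?G i))) * (\<Sum>i'\<in>?G i. (norm (al i - al i'))^2))
     \<le> (\<Sum>i\<in>{1..N}. 3 * Bc^2 * (?e i + (\<Sum>m<Q. ?d i (matchf g N m i)) + (1 / real (card (?G i))) * (\<Sum>i'\<in>?G i. ?e i')))"
  proof (rule sum_mono)
    fix i assume i: "i \<in> {1..N}"
    have nG: "real (card (?G i)) \<ge> 1" using grp_card_pos[OF i, of g] by linarith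
    have "(1 / real (card (?G i))) * (\<Sum>i'\<in>?G i. (norm (al i - al i'))^2)
       \<le> (1 / real (card (?G i))) * (\<Sum>i'\<in>?G i. 3 * Bc^2 * (?e i + ?d i i' + ?e i'))"
      by (intro mult_left_mono sum_mono pt) auto
    also have "\<dots> = 3 * Bc^2 * (?e i + (1 / real (card (?G i))) * (\<Sum>i'\<in>?G i. ?d i i') + (1 / real (card (?G i))) * (\<Sum>i'\<in>?G i. ?e i'))"
    proof -
      have "(\<Sum>i'\<in>?G i. 3 * Bc^2 * (?e i + ?d i i' + ?e i')) = 3 * Bc^2 * (real (card (?G i)) * ?e i + (\<Sum>i'\<in>?G i. ?d i i') + (\<Sum>i'\<in>?G i. ?e i'))"
        by (simp add: sum.distrib sum_distrib_left[symmetric])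
      moreover have hlp: "\<And>n k a b c::real. n \<noteq> 0 \<Longrightarrow> (1/n) * (k * (n * a + b + c)) = k * (a + (1/n) * b + (1/n) * c)"
        by (simp add: field_simps)
      moreover have "real (card (?G i)) \<noteq> 0" using nG by linarith
      ultimately show ?thesis by (simp only:)
    qed
    also have "\<dots> \<le> 3 * Bc^2 * (?e i + (\<Sum>m<Q. ?d i (matchf g N m i)) + (1 / real (card (?G i))) * (\<Sum>i'\<in>?G i. ?e i'))"
    proof -
      have "(1 / real (card (?G i))) * (\<Sum>i'\<in>?G i. ?d i i') \<le> (\<Sum>i'\<in>?G i. ?d i i')"
        using nG by (intro mult_left_le_one_le sum_nonneg) auto
      also have "\<dots> \<le> (\<Sum>m<Q. ?d i (matchf g N m i))"
        by (rule matchf_sum[OF i _ Q[OF i]]) simp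
      finally show ?thesis by (intro mult_left_mono add_mono) auto
    qed
    finally show "(1 / real (card (?G i))) * (\<Sum>i'\<in>?G i. (norm (al i - al i'))^2)
       \<le> 3 * Bc^2 * (?e i + (\<Sum>m<Q. ?d i (matchf g N m i)) + (1 / real (card (?G i))) * (\<Sum>i'\<in>?G i. ?e i'))" .
  qed
  also have "\<dots> = 3 * Bc^2 * ((\<Sum>i\<in>{1..N}. ?e i) + (\<Sum>i\<in>{1..N}. \<Sum>m<Q. ?d i (matchf g N m i))
        + (\<Sum>i\<in>{1..N}. (1 / real (card (?G i))) * (\<Sum>i'\<in>?G i. ?e i')))"
    by (simp only: sum_distrib_left[symmetric] sum.distrib)
  also have "\<dots> = 3 * Bc^2 * (2 * (\<Sum>i\<in>{1..N}. ?e i) + (\<Sum>m<Q. \<Sum>i\<in>{1..N}. ?d i (matchf g N m i)))"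
    by (simp only: grp_sum_avg[of N g] sum.swap[of _ "{1..N}" "{..<Q}"]) simp
  finally show ?thesis .
qed



lemma op_set_ne: "{measure M B | B. B \<in> sets M \<and> A \<subseteq> B} \<noteq> {}" if "A \<subseteq> space M"
  using that by blast

lemma op_bdd: "bdd_below {measure M B | B. B \<in> sets M \<and> A \<subseteq> B}"
  by (rule bdd_belowI[of _ 0]) auto

lemma op_nonneg: "A \<subseteq> space M \<Longrightarrow> 0 \<le> outer_prob M A"
  unfolding outer_prob_def by (rule cInf_greatest[OF op_set_ne]) auto

lemma op_le_measure: "B \<in> sets M \<Longrightarrow> A \<subseteq> B \<Longrightarrow> outer_prob M A \<le> measure M B"
  unfolding outer_prob_def by (rule cInf_lower[OF _ op_bdd]) auto

lemma op_mono: "A \<subseteq> B \<Longrightarrow> B \<subseteq> space M \<Longrightarrow> outer_prob M A \<le> outer_prob M B"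
  unfolding outer_prob_def
  by (rule cInf_superset_mono[OF op_set_ne op_bdd]) auto

lemma op_empty: "outer_prob M {} = 0"
proof -
  have "outer_prob M {} \<le> measure M {}" by (rule op_le_measure) auto
  moreover have "0 \<le> outer_prob M {}" by (rule op_nonneg) auto
  ultimately show ?thesis by simp
qed

lemma op_subadd:
  assumes P: "prob_space M" and A: "A \<subseteq> space M" and B: "B \<subseteq> space M"
  shows "outer_prob M (A \<union> B) \<le> outer_prob M A + outer_prob M B"
proof -
  interpret prob_space M by (rule P)
  have *: "outer_prob M (A \<union> B) - measure M D \<le> measure M C"
    if "C \<in> sets M" "A \<subseteq> C" "D \<in> sets M" "B \<subseteq> D" for C D
  proof -
    have "outer_prob M (A \<union> B) \<le> measure M (C \<union> D)" by (rule op_le_measure) (use that in auto)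
    also have "\<dots> \<le> measure M C + measure M D" using that by (intro measure_Un_le) auto
    finally show ?thesis by simp
  qed
  have **: "outer_prob M (A \<union> B) - measure M D \<le> outer_prob M A" if "D \<in> sets M" "B \<subseteq> D" for D
    unfolding outer_prob_def[of M A]
    by (rule cInf_greatest[OF op_set_ne[OF A]]) (use * that in \<open>auto simp: outer_prob_def\<close>)
  have "outer_prob M (A \<union> B) - outer_prob M A \<le> outer_prob M B"
    unfolding outer_prob_def[of M B]
    by (rule cInf_greatest[OF op_set_ne[OF B]]) (use ** in \<open>force simp: outer_prob_def\<close>)
  then show ?thesis by simp
qed

lemma bigOP_zero: "bigOP M F (\<lambda>n w. 0) a"
  unfolding bigOP_def by (auto intro!: exI[of _ 0] simp: op_empty)

lemma bigOP_add:
  assumes P: "prob_space M" and Y: "bigOP M F Y a" and Z: "bigOP M F Z a"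
  shows "bigOP M F (\<lambda>n w. Y n w + Z n w) a"
  unfolding bigOP_def
proof (intro allI impI)
  fix eps :: real assume e: "eps > 0"
  obtain B1 where B1: "eventually (\<lambda>n. outer_prob M {w \<in> space M. \<bar>Y n w\<bar> > B1 * a n} < eps / 2) F"
    using Y e unfolding bigOP_def by (meson half_gt_zero)
  obtain B2 where B2: "eventually (\<lambda>n. outer_prob M {w \<in> space M. \<bar>Z n w\<bar> > B2 * a n} < eps / 2) F"
    using Z e unfolding bigOP_def by (meson half_gt_zero)
  show "\<exists>Bd. eventually (\<lambda>n. outer_prob M {w \<in> space M. \<bar>Y n w + Z n w\<bar> > Bd * a n} < eps) F"
  proof (intro exI[of _ "B1 + B2"])
    show "eventually (\<lambda>n. outer_prob M {w \<in> space M. \<bar>Y n w + Z n w\<bar> > (B1 + B2) * a n} < eps) F"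
      using B1 B2
    proof eventually_elim
      case (elim n)
      have "{w \<in> space M. \<bar>Y n w + Z n w\<bar> > (B1 + B2) * a n} \<subseteq>
            {w \<in> space M. \<bar>Y n w\<bar> > B1 * a n} \<union> {w \<in> space M. \<bar>Z n w\<bar> > B2 * a n}"
        by (auto simp: distrib_right)
      then have "outer_prob M {w \<in> space M. \<bar>Y n w + Z n w\<bar> > (B1 + B2) * a n}
          \<le> outer_prob M ({w \<in> space M. \<bar>Y n w\<bar> > B1 * a n} \<union> {w \<in> space M. \<bar>Z n w\<bar> > B2 * a n})"
        by (rule op_mono) auto
      also have "\<dots> \<le> outer_prob M {w \<in> space M. \<bar>Y n w\<bar> > B1 * a n} + outer_prob M {w \<in> space M. \<bar>Z n w\<bar> > B2 * a n}"
        by (rule op_subadd[OF P]) auto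
      finally show ?case using elim by simp
    qed
  qed
qed

lemma bigOP_sum:
  assumes P: "prob_space M" and fin: "finite I" and Y: "\<And>m. m \<in> I \<Longrightarrow> bigOP M F (Y m) a"
  shows "bigOP M F (\<lambda>n w. \<Sum>m\<in>I. Y m n w) a"
  using fin Y
proof (induction I rule: finite_induct)
  case empty then show ?case by (simp add: bigOP_zero)
next
  case (insert x I)
  then have "bigOP M F (\<lambda>n w. Y x n w + (\<Sum>m\<in>I. Y m n w)) a"
    by (intro bigOP_add[OF P]) auto
  then show ?case using insert by simp
qed




lemma det_main:
  fixes g c :: "nat \<Rightarrow> nat" and N T Q :: nat and X :: "nat \<Rightarrow> nat \<Rightarrow> real^'k::finite"
    and al :: "nat \<Rightarrow> 'a::real_normed_vector" and ga :: "nat \<Rightarrow> 'c::real_normed_vector"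
    and h :: "'a \<times> 'c \<Rightarrow> real"
    and lh fh :: "nat \<Rightarrow> 'v::real_normed_vector" and lam :: "'a \<Rightarrow> 'v" and fs :: "'c \<Rightarrow> 'v"
    and Omega :: "real^'k^'k"
  assumes N: "N \<ge> 1" and T: "T \<ge> 1"
    and mixed: "\<And>a a' c c'. a \<in> A \<Longrightarrow> a' \<in> A \<Longrightarrow> c \<in> Cs \<Longrightarrow> c' \<in> Cs \<Longrightarrow>
      \<bar>h (a, c) - h (a, c') - h (a', c) + h (a', c')\<bar> \<le> L * norm (a - a') * norm (c - c')"
    and L: "L \<ge> 0" and al: "\<And>i. al i \<in> A" and ga: "\<And>t. ga t \<in> Cs"
    and lipA: "\<And>a b. a \<in> A \<Longrightarrow> b \<in> A \<Longrightarrow> norm (a - b) \<le> Bc * norm (lam a - lam b)"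
    and lipC: "\<And>a b. a \<in> Cs \<Longrightarrow> b \<in> Cs \<Longrightarrow> norm (a - b) \<le> Bc * norm (fs a - fs b)"
    and Bc: "Bc > 0"
    and Qg: "\<And>i. i \<in> {1..N} \<Longrightarrow> card {i' \<in> {1..N}. g i' = g i} \<le> Q"
    and Qc: "\<And>t. t \<in> {1..T} \<Longrightarrow> card {t' \<in> {1..T}. c t' = c t} \<le> Q"
    and mx: "\<not> (Max {\<bar>two_way_demean g c N T X i t $ k\<bar> | k i t. i \<in> {1..N} \<and> t \<in> {1..T}} > B1)"
    and mu: "mu > 0" and coer: "\<And>v. v \<bullet> (Omega *v v) \<ge> mu * (norm v)^2"
    and dS: "\<not> (dist ((1 / (real N * real T)) *\<^sub>R (\<Sum>i\<in>{1..N}. \<Sum>t\<in>{1..T}.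
                  outer_self (two_way_demean g c N T X i t))) Omega > mu / (2 * real (CARD('k))^2))"
  shows "norm (kappa_NT g c N T X (\<lambda>i t. h (al i, ga t))) \<le>
     real (CARD('k)) * B1 * L / mu * 6 * Bc^2 *
       ((1 / real N) * (\<Sum>i\<in>{1..N}. (norm (lh i - lam (al i)))^2)
      + (1 / real T) * (\<Sum>t\<in>{1..T}. (norm (fh t - fs (ga t)))^2)
      + (\<Sum>m<Q. (1 / real N) * (\<Sum>i\<in>{1..N}. (norm (lh i - lh (matchf g N m i)))^2))
      + (\<Sum>m<Q. (1 / real T) * (\<Sum>t\<in>{1..T}. (norm (fh t - fh (matchf c T m t)))^2)))"
proof -
  define K where "K = real (CARD('k))"
  define Xt where "Xt = two_way_demean g c N T X"
  define Gt where "Gt = two_way_demean g c N T (\<lambda>i t. h (al i, ga t))"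
  define S where "S = (\<Sum>i\<in>{1..N}. \<Sum>t\<in>{1..T}. outer_self (Xt i t))"
  define b where "b = (\<Sum>i\<in>{1..N}. \<Sum>t\<in>{1..T}. Gt i t *\<^sub>R Xt i t)"
  define DA where "DA i = (1 / real (card {i' \<in> {1..N}. g i' = g i})) * (\<Sum>i'\<in>{i' \<in> {1..N}. g i' = g i}. (norm (al i - al i'))^2)" for i
  define DC where "DC t = (1 / real (card {t' \<in> {1..T}. c t' = c t})) * (\<Sum>t'\<in>{t' \<in> {1..T}. c t' = c t}. (norm (ga t - ga t'))^2)" for t
  define E1 where "E1 = (\<Sum>i\<in>{1..N}. (norm (lh i - lam (al i)))^2)"
  define E2 where "E2 = (\<Sum>t\<in>{1..T}. (norm (fh t - fs (ga t)))^2)"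
  define D1 where "D1 = (\<Sum>m<Q. \<Sum>i\<in>{1..N}. (norm (lh i - lh (matchf g N m i)))^2)"
  define D2 where "D2 = (\<Sum>m<Q. \<Sum>t\<in>{1..T}. (norm (fh t - fh (matchf c T m t)))^2)"
  define SA where "SA = (\<Sum>i\<in>{1..N}. DA i)"
  define SC where "SC = (\<Sum>t\<in>{1..T}. DC t)"
  have Nr: "real N > 0" and Tr: "real T > 0" using N T by auto
  have E1: "E1 \<ge> 0" "E2 \<ge> 0" "D1 \<ge> 0" "D2 \<ge> 0" unfolding E1_def E2_def D1_def D2_def
    by (auto intro!: sum_nonneg)
  have k1: "norm (kappa_NT g c N T X (\<lambda>i t. h (al i, ga t))) \<le> 2 * norm b / ((real N * real T) * mu)"
    unfolding kappa_NT_def Xt_def[symmetric] Gt_def[symmetric] S_def[symmetric] b_def[symmetric]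
    by (rule inv_bound[OF _ mu coer]) (use Nr Tr dS in \<open>auto simp: S_def Xt_def\<close>)
  define MS where "MS = {\<bar>two_way_demean g c N T X i t $ k\<bar> | k i t. i \<in> {1..N} \<and> t \<in> {1..T}}"
  have finMS: "finite MS"
  proof -
    have "MS \<subseteq> (\<lambda>(k, i, t). \<bar>two_way_demean g c N T X i t $ k\<bar>) ` (UNIV \<times> {1..N} \<times> {1..T})"
      unfolding MS_def by (force intro: image_eqI[where x="(k, i, t)" for k i t])
    then show ?thesis by (rule finite_subset) auto
  qed
  have comp: "\<bar>Xt i t $ k\<bar> \<le> B1" if "i \<in> {1..N}" "t \<in> {1..T}" for i t k
  proof -
    have "\<bar>Xt i t $ k\<bar> \<in> MS" unfolding MS_def Xt_def using that by blast
    then have "\<bar>Xt i t $ k\<bar> \<le> Max MS" by (rule Max_ge[OF finMS])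
    then show ?thesis using mx unfolding MS_def by simp
  qed
  have B1: "B1 \<ge> 0"
  proof -
    have "(1::nat) \<in> {1..N}" "(1::nat) \<in> {1..T}" using N T by auto
    from comp[OF this, of undefined] show ?thesis by simp
  qed
  have xb: "norm (Xt i t) \<le> K * B1" if "i \<in> {1..N}" "t \<in> {1..T}" for i t
  proof -
    have "norm (Xt i t) \<le> (\<Sum>k\<in>UNIV. \<bar>Xt i t $ k\<bar>)" by (rule norm_le_l1_cart)
    also have "\<dots> \<le> (\<Sum>k\<in>(UNIV::'k set). B1)" by (intro sum_mono comp that)
    finally show ?thesis by (simp add: K_def)
  qed
  have k2: "norm b \<le> (\<Sum>i\<in>{1..N}. \<Sum>t\<in>{1..T}. \<bar>Gt i t\<bar>) * (K * B1)"
  proof -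
    have "norm b \<le> (\<Sum>i\<in>{1..N}. norm (\<Sum>t\<in>{1..T}. Gt i t *\<^sub>R Xt i t))"
      unfolding b_def by (rule norm_sum)
    also have "\<dots> \<le> (\<Sum>i\<in>{1..N}. \<Sum>t\<in>{1..T}. norm (Gt i t *\<^sub>R Xt i t))"
      by (intro sum_mono norm_sum)
    also have "\<dots> \<le> (\<Sum>i\<in>{1..N}. \<Sum>t\<in>{1..T}. \<bar>Gt i t\<bar> * (K * B1))"
      by (intro sum_mono) (auto intro!: mult_left_mono xb)
    finally show ?thesis by (simp add: sum_distrib_right)
  qed
  have k3: "(\<Sum>i\<in>{1..N}. \<Sum>t\<in>{1..T}. \<bar>Gt i t\<bar>) \<le> (L / 2) * (real T * SA + real N * SC)"
  proof -
    have "(\<Sum>i\<in>{1..N}. \<Sum>t\<in>{1..T}. \<bar>Gt i t\<bar>) \<le> (\<Sum>i\<in>{1..N}. \<Sum>t\<in>{1..T}. (L / 2) * (DA i + DC t))"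
      unfolding Gt_def DA_def DC_def
      by (intro sum_mono gamma_pt_bound[OF mixed L al ga]) auto
    also have "\<dots> = (L / 2) * (real T * SA + real N * SC)"
    proof -
      have "(\<Sum>i\<in>{1..N}. \<Sum>t\<in>{1..T}. (L / 2) * (DA i + DC t)) = (L / 2) * (\<Sum>i\<in>{1..N}. \<Sum>t\<in>{1..T}. DA i + DC t)"
        by (simp add: sum_distrib_left)
      also have "(\<Sum>i\<in>{1..N}. \<Sum>t\<in>{1..T}. DA i + DC t) = (\<Sum>i\<in>{1..N}. real T * DA i + SC)"
        unfolding SC_def by (simp add: sum.distrib)
      also have "\<dots> = real T * SA + real N * SC"
        unfolding SA_def by (simp add: sum.distrib sum_distrib_left)
      finally show ?thesis .
    qed
    finally show ?thesis .
  qed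
  have k4: "SA \<le> 3 * Bc^2 * (2 * E1 + D1)"
    unfolding SA_def DA_def E1_def D1_def by (rule DA_bound[OF lipA Bc al Qg])
  have k5: "SC \<le> 3 * Bc^2 * (2 * E2 + D2)"
    unfolding SC_def DC_def E2_def D2_def by (rule DA_bound[OF lipC Bc ga Qc])
  have KB: "K * B1 \<ge> 0" using B1 by (simp add: K_def)
  have SA0: "SA \<ge> 0" "SC \<ge> 0" unfolding SA_def SC_def DA_def DC_def by (intro sum_nonneg mult_nonneg_nonneg; simp)+
  have "norm (kappa_NT g c N T X (\<lambda>i t. h (al i, ga t))) \<le> 2 * norm b / ((real N * real T) * mu)" by (rule k1)
  also have "\<dots> \<le> 2 * ((L / 2) * (real T * SA + real N * SC) * (K * B1)) / ((real N * real T) * mu)"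
  proof -
    have "norm b \<le> (L / 2) * (real T * SA + real N * SC) * (K * B1)"
      using k2 mult_right_mono[OF k3 KB] by linarith
    then show ?thesis using Nr Tr mu by (intro divide_right_mono) auto
  qed
  also have "\<dots> = K * B1 * L / mu * (SA / real N + SC / real T)"
    using Nr Tr mu by (simp add: field_simps)
  also have "\<dots> \<le> K * B1 * L / mu * (3 * Bc^2 * (2 * E1 + D1) / real N + 3 * Bc^2 * (2 * E2 + D2) / real T)"
    using KB L mu Nr Tr k4 k5 by (intro mult_left_mono add_mono divide_right_mono) auto
  also have "\<dots> \<le> K * B1 * L / mu * 6 * Bc^2 * (E1 / real N + E2 / real T + D1 / real N + D2 / real T)"
  proof -
    have "3 * Bc^2 * (2 * E1 + D1) / real N + 3 * Bc^2 * (2 * E2 + D2) / real T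
        \<le> 6 * Bc^2 * (E1 / real N + E2 / real T + D1 / real N + D2 / real T)"
    proof -
      have "3 * Bc^2 * (2 * E1 + D1) / real N \<le> 6 * Bc^2 * (E1 / real N + D1 / real N)"
        using E1 Nr by (simp add: field_simps)
      moreover have "3 * Bc^2 * (2 * E2 + D2) / real T \<le> 6 * Bc^2 * (E2 / real T + D2 / real T)"
        using E1 Tr by (simp add: field_simps)
      ultimately show ?thesis by (simp add: algebra_simps)
    qed
    then show ?thesis using KB L mu
      by (metis (no_types, opaque_lifting) mult.assoc divide_nonneg_pos mult_left_mono mult_nonneg_nonneg times_divide_eq_left)
  qed
  also have "\<dots> = real (CARD('k)) * B1 * L / mu * 6 * Bc^2 *
       ((1 / real N) * (\<Sum>i\<in>{1..N}. (norm (lh i - lam (al i)))^2)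
      + (1 / real T) * (\<Sum>t\<in>{1..T}. (norm (fh t - fs (ga t)))^2)
      + (\<Sum>m<Q. (1 / real N) * (\<Sum>i\<in>{1..N}. (norm (lh i - lh (matchf g N m i)))^2))
      + (\<Sum>m<Q. (1 / real T) * (\<Sum>t\<in>{1..T}. (norm (fh t - fh (matchf c T m t)))^2)))"
    unfolding K_def E1_def E2_def D1_def D2_def
    by (simp add: sum_distrib_left[symmetric] sum_divide_distrib)
  finally show ?thesis .
qed



lemma coercive:
  fixes Omega :: "real^'k::finite^'k"
  assumes pd: "pos_def_mat Omega"
  shows "\<exists>mu>0. \<forall>v. v \<bullet> (Omega *v v) \<ge> mu * (norm v)^2"
proof -
  let ?q = "\<lambda>v::real^'k. v \<bullet> (Omega *v v)"
  have cont: "continuous_on (sphere 0 1) ?q"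
    by (intro continuous_intros matrix_vector_mult_linear_continuous_on[THEN continuous_on_compose2[of UNIV]]) auto
  obtain u where u: "u \<in> sphere 0 1" and umin: "\<forall>y\<in>sphere 0 1. ?q u \<le> ?q y"
    using continuous_attains_inf[OF compact_sphere _ cont] by (auto simp: sphere_eq_empty)
  have "u \<noteq> 0" using u by auto
  then have mu: "?q u > 0" using pd unfolding pos_def_mat_def by blast
  have "?q v \<ge> ?q u * (norm v)^2" for v
  proof (cases "v = 0")
    case True then show ?thesis by simp
  next
    case False
    define w where "w = (1 / norm v) *\<^sub>R v"
    have w: "w \<in> sphere 0 1" using False by (simp add: w_def)
    have vw: "v = norm v *\<^sub>R w" using False by (simp add: w_def)
    have "?q v = (norm v)^2 * ?q w"
      by (subst (1 2) vw) (simp add: matrix_vector_mult_scaleR inner_scaleR_left inner_scaleR_right power2_eq_square)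
    moreover have "?q u \<le> ?q w" using umin w by blast
    ultimately show ?thesis by (simp add: mult_right_mono mult.commute)
  qed
  then show ?thesis using mu by blast
qed


theorem lemma2:
  fixes M :: "'w measure"
    and A :: "'a::euclidean_space set" and Cs :: "'c::euclidean_space set"
    and h :: "'a \<times> 'c \<Rightarrow> real"
    and alpha :: "nat \<Rightarrow> nat \<Rightarrow> 'w \<Rightarrow> nat \<Rightarrow> 'a"
    and gamma :: "nat \<Rightarrow> nat \<Rightarrow> 'w \<Rightarrow> nat \<Rightarrow> 'c"
    and X :: "nat \<Rightarrow> nat \<Rightarrow> 'w \<Rightarrow> nat \<Rightarrow> nat \<Rightarrow> real^'k::finite"
    and g c :: "nat \<Rightarrow> nat \<Rightarrow> 'w \<Rightarrow> nat \<Rightarrow> nat"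
    and Qmax :: nat
    and lhat :: "nat \<Rightarrow> nat \<Rightarrow> 'w \<Rightarrow> nat \<Rightarrow> real^'r::finite"
    and fhat :: "nat \<Rightarrow> nat \<Rightarrow> 'w \<Rightarrow> nat \<Rightarrow> real^'r"
    and xi :: "nat \<Rightarrow> nat \<Rightarrow> real"
    and Omega :: "real^'k^'k"
  assumes P: "prob_space M"
    (* xi_NT > 0, xi_NT \<rightarrow> 0 as N,T \<rightarrow> \<infinity> *)
    and xi_pos: "\<And>N T. xi N T > 0"
    and xi_lim: "((\<lambda>(N, T). xi N T) \<longlongrightarrow> 0) (sequentially \<times>\<^sub>F sequentially)"
    (* (i) h twice continuously differentiable, uniformly bounded second derivatives *)
    and h_C2: "\<exists>U Dh D2h L. open U \<and> A \<times> Cs \<subseteq> U \<and>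
          (\<forall>x\<in>U. (h has_derivative blinfun_apply (Dh x)) (at x)) \<and>
          (\<forall>x\<in>U. (Dh has_derivative blinfun_apply (D2h x)) (at x)) \<and>
          continuous_on U D2h \<and>
          (\<forall>x\<in>A \<times> Cs. norm (D2h x :: ('a \<times> 'c) \<Rightarrow>\<^sub>L (('a \<times> 'c) \<Rightarrow>\<^sub>L real)) \<le> L)"
    and alpha_in: "\<And>N T w i. alpha N T w i \<in> A"
    and gamma_in: "\<And>N T w t. gamma N T w t \<in> Cs"
    (* (ii) group sizes bounded by a fixed Q_max *)
    and g_size: "\<And>N T w i. i \<in> {1..N} \<Longrightarrow>
          card {i' \<in> {1..N}. g N T w i' = g N T w i} \<le> Qmax"
    and c_size: "\<And>N T w t. t \<in> {1..T} \<Longrightarrow>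
          card {t' \<in> {1..T}. c N T w t' = c N T w t} \<le> Qmax"
    (* (iii) *)
    and iii: "\<exists>lam fs (Bc::real). Bc > 0 \<and> convex A \<and> convex Cs \<and>
          (\<forall>a\<in>A. \<forall>b\<in>A. norm (a - b) \<le> Bc * norm (lam a - lam b :: real^'r)) \<and>
          (\<forall>a\<in>Cs. \<forall>b\<in>Cs. norm (a - b) \<le> Bc * norm (fs a - fs b :: real^'r)) \<and>

          bigOP M (sequentially \<times>\<^sub>F sequentially)
            (\<lambda>(N, T) w. (1 / real N) * (\<Sum>i\<in>{1..N}. (norm (lhat N T w i - lam (alpha N T w i)))\<^sup>2))
            (\<lambda>(N, T). xi N T) \<and>
          bigOP M (sequentially \<times>\<^sub>F sequentially)
            (\<lambda>(N, T) w. (1 / real T) * (\<Sum>t\<in>{1..T}. (norm (fhat N T w t - fs (gamma N T w t)))\<^sup>2))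
            (\<lambda>(N, T). xi N T)"
    (* (v) *)
    and v_lam: "\<And>j. (\<And>N T w i. i \<in> {1..N} \<Longrightarrow>
                    j N T w i \<in> {1..N} \<and> g N T w (j N T w i) = g N T w i) \<Longrightarrow>
          bigOP M (sequentially \<times>\<^sub>F sequentially)
            (\<lambda>(N, T) w. (1 / real N) * (\<Sum>i\<in>{1..N}. (norm (lhat N T w i - lhat N T w (j N T w i)))\<^sup>2))
            (\<lambda>(N, T). xi N T)"
    and v_f: "\<And>s. (\<And>N T w t. t \<in> {1..T} \<Longrightarrow>
                    s N T w t \<in> {1..T} \<and> c N T w (s N T w t) = c N T w t) \<Longrightarrow>
          bigOP M (sequentially \<times>\<^sub>F sequentially)
            (\<lambda>(N, T) w. (1 / real T) * (\<Sum>t\<in>{1..T}. (norm (fhat N T w t - fhat N T w (s N T w t)))\<^sup>2))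
            (\<lambda>(N, T). xi N T)"
    (* (vi) *)
    and vi_max: "bigOP M (sequentially \<times>\<^sub>F sequentially)
            (\<lambda>(N, T) w. Max {\<bar>two_way_demean (g N T w) (c N T w) N T (X N T w) i t $ k\<bar>
                              | k i t. i \<in> {1..N} \<and> t \<in> {1..T}})
            (\<lambda>_. 1)"
    and vi_plim: "conv_in_prob M (sequentially \<times>\<^sub>F sequentially)
            (\<lambda>(N, T) w. (1 / (real N * real T)) *\<^sub>R
               (\<Sum>i\<in>{1..N}. \<Sum>t\<in>{1..T}.
                  outer_self (two_way_demean (g N T w) (c N T w) N T (X N T w) i t)))
            Omega"
    and Omega_pd: "pos_def_mat Omega"
  shows "bigOP M (sequentially \<times>\<^sub>F sequentially)
            (\<lambda>(N, T) w. norm (kappa_NT (g N T w) (c N T w) N T (X N T w)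
                                  (\<lambda>i t. h (alpha N T w i, gamma N T w t))))
            (\<lambda>(N, T). xi N T)"
  proof -
  let ?F = "sequentially \<times>\<^sub>F sequentially :: (nat \<times> nat) filter"
  obtain U Dh D2h L where sub: "A \<times> Cs \<subseteq> U"
      and d1: "\<forall>x\<in>U. (h has_derivative blinfun_apply (Dh x)) (at x)"
      and d2: "\<forall>x\<in>U. (Dh has_derivative blinfun_apply (D2h x)) (at x)"
      and bd: "\<forall>x\<in>A \<times> Cs. norm (D2h x :: ('a \<times> 'c) \<Rightarrow>\<^sub>L (('a \<times> 'c) \<Rightarrow>\<^sub>L real)) \<le> L"
    using h_C2 by blast
  obtain lam fs and Bc :: real where Bc: "Bc > 0" and cA: "convex A" and cC: "convex Cs"
      and lipA: "\<forall>a\<in>A. \<forall>b\<in>A. norm (a - b) \<le> Bc * norm (lam a - lam b :: real^'r)"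
      and lipC: "\<forall>a\<in>Cs. \<forall>b\<in>Cs. norm (a - b) \<le> Bc * norm (fs a - fs b :: real^'r)"
      and op1: "bigOP M ?F
            (\<lambda>(N, T) w. (1 / real N) * (\<Sum>i\<in>{1..N}. (norm (lhat N T w i - lam (alpha N T w i)))\<^sup>2))
            (\<lambda>(N, T). xi N T)"
      and op2: "bigOP M ?F
            (\<lambda>(N, T) w. (1 / real T) * (\<Sum>t\<in>{1..T}. (norm (fhat N T w t - fs (gamma N T w t)))\<^sup>2))
            (\<lambda>(N, T). xi N T)"
    using iii by blast
  have mixed: "\<bar>h (a, c') - h (a, c'') - h (a', c') + h (a', c'')\<bar> \<le> L * norm (a - a') * norm (c' - c'')"
    if "a \<in> A" "a' \<in> A" "c' \<in> Cs" "c'' \<in> Cs" for a a' c' c''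
    by (rule mixed_bound[OF cA cC sub d1 d2 bd that])
  have L0: "L \<ge> 0"
    using bd alpha_in[of 0 0 undefined 0] gamma_in[of 0 0 undefined 0]
    by (meson mem_Sigma_iff norm_ge_zero order_trans)
  obtain mu where mu: "mu > 0" and coer: "\<And>v. v \<bullet> (Omega *v v) \<ge> mu * (norm v)^2"
    using coercive[OF Omega_pd] by blast
  define Zf where "Zf = (\<lambda>(N, T) w.
       (1 / real N) * (\<Sum>i\<in>{1..N}. (norm (lhat N T w i - lam (alpha N T w i)))^2)
      + (1 / real T) * (\<Sum>t\<in>{1..T}. (norm (fhat N T w t - fs (gamma N T w t)))^2)
      + (\<Sum>m<Qmax. (1 / real N) * (\<Sum>i\<in>{1..N}. (norm (lhat N T w i - lhat N T w (matchf (g N T w) N m i)))^2))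
      + (\<Sum>m<Qmax. (1 / real T) * (\<Sum>t\<in>{1..T}. (norm (fhat N T w t - fhat N T w (matchf (c N T w) T m t)))^2)))"
  have op3: "bigOP M ?F
            (\<lambda>(N, T) w. (1 / real N) * (\<Sum>i\<in>{1..N}. (norm (lhat N T w i - lhat N T w (matchf (g N T w) N m i)))\<^sup>2))
            (\<lambda>(N, T). xi N T)" for m
    by (rule v_lam) (rule matchf_prop)
  have op4: "bigOP M ?F
            (\<lambda>(N, T) w. (1 / real T) * (\<Sum>t\<in>{1..T}. (norm (fhat N T w t - fhat N T w (matchf (c N T w) T m t)))\<^sup>2))
            (\<lambda>(N, T). xi N T)" for m
    by (rule v_f) (rule matchf_prop)
  have ZO: "bigOP M ?F Zf (\<lambda>(N, T). xi N T)"
  proof -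
    have "bigOP M ?F (\<lambda>n w.
        (\<lambda>(N, T) w. (1 / real N) * (\<Sum>i\<in>{1..N}. (norm (lhat N T w i - lam (alpha N T w i)))\<^sup>2)) n w
      + (\<lambda>(N, T) w. (1 / real T) * (\<Sum>t\<in>{1..T}. (norm (fhat N T w t - fs (gamma N T w t)))\<^sup>2)) n w
      + (\<Sum>m<Qmax. (\<lambda>(N, T) w. (1 / real N) * (\<Sum>i\<in>{1..N}. (norm (lhat N T w i - lhat N T w (matchf (g N T w) N m i)))\<^sup>2)) n w)
      + (\<Sum>m<Qmax. (\<lambda>(N, T) w. (1 / real T) * (\<Sum>t\<in>{1..T}. (norm (fhat N T w t - fhat N T w (matchf (c N T w) T m t)))\<^sup>2)) n w))
      (\<lambda>(N, T). xi N T)"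
      by (intro bigOP_add[OF P] bigOP_sum[OF P] op1 op2 op3 op4 finite_lessThan)
    moreover have "(\<lambda>n w.
        (\<lambda>(N, T) w. (1 / real N) * (\<Sum>i\<in>{1..N}. (norm (lhat N T w i - lam (alpha N T w i)))\<^sup>2)) n w
      + (\<lambda>(N, T) w. (1 / real T) * (\<Sum>t\<in>{1..T}. (norm (fhat N T w t - fs (gamma N T w t)))\<^sup>2)) n w
      + (\<Sum>m<Qmax. (\<lambda>(N, T) w. (1 / real N) * (\<Sum>i\<in>{1..N}. (norm (lhat N T w i - lhat N T w (matchf (g N T w) N m i)))\<^sup>2)) n w)
      + (\<Sum>m<Qmax. (\<lambda>(N, T) w. (1 / real T) * (\<Sum>t\<in>{1..T}. (norm (fhat N T w t - fhat N T w (matchf (c N T w) T m t)))\<^sup>2)) n w)) = Zf"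
      unfolding Zf_def by (intro ext) (auto split: prod.splits)
    ultimately show ?thesis by simp
  qed
  show ?thesis unfolding bigOP_def
  proof (intro allI impI)
    fix eps :: real assume e: "eps > 0"
    then have e4: "eps / 4 > 0" by simp
    obtain B1 where ev1: "eventually (\<lambda>n. outer_prob M {w \<in> space M. \<bar>(\<lambda>(N, T) w. Max {\<bar>two_way_demean (g N T w) (c N T w) N T (X N T w) i t $ k\<bar>
                              | k i t. i \<in> {1..N} \<and> t \<in> {1..T}}) n w\<bar> > B1 * (\<lambda>_. 1) n} < eps / 4) ?F"
      using vi_max e4 unfolding bigOP_def by blast
    obtain B2 where ev2: "eventually (\<lambda>n. outer_prob M {w \<in> space M. \<bar>Zf n w\<bar> > B2 * (\<lambda>(N, T). xi N T) n} < eps / 4) ?F"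
      using ZO e4 unfolding bigOP_def by blast
    define eta where "eta = mu / (2 * real (CARD('k))^2)"
    have eta: "eta > 0" using mu by (simp add: eta_def)
    have ev3: "eventually (\<lambda>n. outer_prob M {w \<in> space M. dist ((\<lambda>(N, T) w. (1 / (real N * real T)) *\<^sub>R
               (\<Sum>i\<in>{1..N}. \<Sum>t\<in>{1..T}.
                  outer_self (two_way_demean (g N T w) (c N T w) N T (X N T w) i t))) n w) Omega > eta} < eps / 4) ?F"
      using vi_plim eta e4 unfolding conv_in_prob_def by (blast dest: order_tendstoD(2))
    have ev4: "eventually (\<lambda>n. fst n \<ge> 1 \<and> snd n \<ge> 1) ?F"
      unfolding eventually_prod_sequentially by (intro exI[of _ 1]) auto
    define Bd where "Bd = real (CARD('k)) * \<bar>B1\<bar> * L / mu * 6 * Bc^2 * \<bar>B2\<bar>"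
    show "\<exists>Bd. eventually (\<lambda>n. outer_prob M {w \<in> space M. \<bar>(\<lambda>(N, T) w. norm (kappa_NT (g N T w) (c N T w) N T (X N T w)
                                  (\<lambda>i t. h (alpha N T w i, gamma N T w t)))) n w\<bar> > Bd * (\<lambda>(N, T). xi N T) n} < eps) ?F"
    proof (intro exI[of _ Bd])
      show "eventually (\<lambda>n. outer_prob M {w \<in> space M. \<bar>(\<lambda>(N, T) w. norm (kappa_NT (g N T w) (c N T w) N T (X N T w)
                                  (\<lambda>i t. h (alpha N T w i, gamma N T w t)))) n w\<bar> > Bd * (\<lambda>(N, T). xi N T) n} < eps) ?F"
        using ev1 ev2 ev3 ev4
      proof eventually_elim
        case (elim n)
        obtain N T where n: "n = (N, T)" by (cases n)
        define E1 where "E1 = {w \<in> space M. \<bar>Max {\<bar>two_way_demean (g N T w) (c N T w) N T (X N T w) i t $ k\<bar>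
                              | k i t. i \<in> {1..N} \<and> t \<in> {1..T}}\<bar> > B1}"
        define E2 where "E2 = {w \<in> space M. \<bar>Zf (N, T) w\<bar> > B2 * xi N T}"
        define E3 where "E3 = {w \<in> space M. dist ((1 / (real N * real T)) *\<^sub>R
               (\<Sum>i\<in>{1..N}. \<Sum>t\<in>{1..T}.
                  outer_self (two_way_demean (g N T w) (c N T w) N T (X N T w) i t))) Omega > eta}"
        have o1: "outer_prob M E1 < eps / 4" using elim(1) by (simp add: n E1_def)
        have o2: "outer_prob M E2 < eps / 4" using elim(2) by (simp add: n E2_def)
        have o3: "outer_prob M E3 < eps / 4" using elim(3) by (simp add: n E3_def)
        have NT: "N \<ge> 1" "T \<ge> 1" using elim(4) by (auto simp: n)
        have incl: "{w \<in> space M. \<bar>norm (kappa_NT (g N T w) (c N T w) N T (X N T w)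
                                  (\<lambda>i t. h (alpha N T w i, gamma N T w t)))\<bar> > Bd * xi N T} \<subseteq> E1 \<union> E2 \<union> E3"
        proof
          fix w assume w: "w \<in> {w \<in> space M. \<bar>norm (kappa_NT (g N T w) (c N T w) N T (X N T w)
                                  (\<lambda>i t. h (alpha N T w i, gamma N T w t)))\<bar> > Bd * xi N T}"
          show "w \<in> E1 \<union> E2 \<union> E3"
          proof (rule ccontr)
            assume "w \<notin> E1 \<union> E2 \<union> E3"
            then have n1: "\<not> (\<bar>Max {\<bar>two_way_demean (g N T w) (c N T w) N T (X N T w) i t $ k\<bar>
                              | k i t. i \<in> {1..N} \<and> t \<in> {1..T}}\<bar> > B1)"
                and n2: "\<not> (\<bar>Zf (N, T) w\<bar> > B2 * xi N T)"
                and n3: "\<not> (dist ((1 / (real N * real T)) *\<^sub>R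
               (\<Sum>i\<in>{1..N}. \<Sum>t\<in>{1..T}.
                  outer_self (two_way_demean (g N T w) (c N T w) N T (X N T w) i t))) Omega > mu / (2 * real (CARD('k))^2))"
              using w by (auto simp: E1_def E2_def E3_def eta_def)
            have B1: "B1 \<ge> 0" using n1 by linarith
            have mx: "\<not> (Max {\<bar>two_way_demean (g N T w) (c N T w) N T (X N T w) i t $ k\<bar>
                              | k i t. i \<in> {1..N} \<and> t \<in> {1..T}} > B1)" using n1 by linarith
            have kb: "norm (kappa_NT (g N T w) (c N T w) N T (X N T w) (\<lambda>i t. h (alpha N T w i, gamma N T w t)))
                \<le> real (CARD('k)) * B1 * L / mu * 6 * Bc^2 * Zf (N, T) w"
              unfolding Zf_def prod.case
              by (rule det_main[OF NT mixed L0 alpha_in[where N=N and T=T and w=w] gamma_in[where N=N and T=T and w=w] lipA[rule_format] lipC[rule_format] Bc g_size[where N=N and T=T and w=w] c_size[where N=N and T=T and w=w] mx mu coer n3])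
            define C where "C = real (CARD('k)) * B1 * L / mu * 6 * Bc^2"
            have C0: "C \<ge> 0" unfolding C_def using B1 L0 mu by simp
            have xp: "xi N T > 0" by (rule xi_pos)
            have "Zf (N, T) w \<le> \<bar>B2\<bar> * xi N T"
              using n2 xp by (smt (verit) mult_right_mono abs_ge_self less_imp_le)
            then have "C * Zf (N, T) w \<le> C * (\<bar>B2\<bar> * xi N T)" using C0 by (rule mult_left_mono)
            also have "\<dots> = Bd * xi N T" unfolding C_def Bd_def using B1 by simp
            finally have "norm (kappa_NT (g N T w) (c N T w) N T (X N T w) (\<lambda>i t. h (alpha N T w i, gamma N T w t))) \<le> Bd * xi N T"
              using kb unfolding C_def by linarith
            then show False using w by simp
          qed
        qed
        have "outer_prob M {w \<in> space M. \<bar>norm (kappa_NT (g N T w) (c N T w) N T (X N T w)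
                                  (\<lambda>i t. h (alpha N T w i, gamma N T w t)))\<bar> > Bd * xi N T}
             \<le> outer_prob M (E1 \<union> E2 \<union> E3)"
          by (rule op_mono[OF incl]) (auto simp: E1_def E2_def E3_def)
        also have "\<dots> \<le> outer_prob M (E1 \<union> E2) + outer_prob M E3"
          by (rule op_subadd[OF P]) (auto simp: E1_def E2_def E3_def)
        also have "\<dots> \<le> outer_prob M E1 + outer_prob M E2 + outer_prob M E3"
          using op_subadd[OF P, of E1 E2] by (auto simp: E1_def E2_def)
        also have "\<dots> < eps" using o1 o2 o3 e by linarith
        finally show ?case by (simp add: n)
      qed
    qed
  qed
qed

end
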